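(* Every $2\times2\times2$ quaternion tensor $T$ satisfies $\mathrm{rank}(T)\le3$.
   Context: $\mathbb{H}$ denotes the real quaternions. An $n_1\times n_2\times n_3$ quaternion tensor is an array $T=(T_{ijk})$ with entries in $\mathbb{H}$, $1\le i\le n_1$, $1\le j\le n_2$, $1\le k\le n_3$; it is written $T=(A_1;\dots;A_{n_2})$ where the frontal slice $A_j$ is the $n_1\times n_3$ matrix $(T_{ijk})_{i,k}$. A nonzero tensor is simple if $T_{ijk}=a_ib_jc_k$ (quaternion product in this order) for some $\vec a\in\mathbb{H}^{n_1},\vec b\in\mathbb{H}^{n_2},\vec c\in\mathbb{H}^{n_3}$. The rank of $T$ is the least number of simple tensors summing to $T$ (the zero tensor has rank $0$). *)

theory Defs
  imports Main "HOL-Analysis.Analysis"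
begin

text \<open>Real quaternions q = re + im1 i + im2 j + im3 k, with the Hamilton product.\<close>

datatype quat = Quat (Re_q: real) (Im1: real) (Im2: real) (Im3: real)

definition qzero :: quat where "qzero = Quat 0 0 0 0"

definition qadd :: "quat \<Rightarrow> quat \<Rightarrow> quat" where
  "qadd p q = Quat (Re_q p + Re_q q) (Im1 p + Im1 q) (Im2 p + Im2 q) (Im3 p + Im3 q)"

definition qmul :: "quat \<Rightarrow> quat \<Rightarrow> quat" where
  "qmul p q = Quat
     (Re_q p * Re_q q - Im1 p * Im1 q - Im2 p * Im2 q - Im3 p * Im3 q)
     (Re_q p * Im1 q + Im1 p * Re_q q + Im2 p * Im3 q - Im3 p * Im2 q)
     (Re_q p * Im2 q - Im1 p * Im3 q + Im2 p * Re_q q + Im3 p * Im1 q)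
     (Re_q p * Im3 q + Im1 p * Im2 q - Im2 p * Im1 q + Im3 p * Re_q q)"

text \<open>An n1 x n2 x n3 quaternion tensor: a function on index triples; only entries with
  i < n1, j < n2, k < n3 (0-based) are meaningful.\<close>

type_synonym qtensor = "nat \<Rightarrow> nat \<Rightarrow> nat \<Rightarrow> quat"

definition qtensor_eq :: "nat \<Rightarrow> nat \<Rightarrow> nat \<Rightarrow> qtensor \<Rightarrow> qtensor \<Rightarrow> bool" where
  "qtensor_eq n1 n2 n3 S T \<longleftrightarrow> (\<forall>i<n1. \<forall>j<n2. \<forall>k<n3. S i j k = T i j k)"

definition qtensor_zero :: qtensor where "qtensor_zero = (\<lambda>i j k. qzero)"

definition qtensor_add :: "qtensor \<Rightarrow> qtensor \<Rightarrow> qtensor" where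
  "qtensor_add S T = (\<lambda>i j k. qadd (S i j k) (T i j k))"

definition simple_qtensor :: "nat \<Rightarrow> nat \<Rightarrow> nat \<Rightarrow> qtensor \<Rightarrow> bool" where
  "simple_qtensor n1 n2 n3 T \<longleftrightarrow>
     \<not> qtensor_eq n1 n2 n3 T qtensor_zero \<and>
     (\<exists>a b c :: nat \<Rightarrow> quat. \<forall>i<n1. \<forall>j<n2. \<forall>k<n3. T i j k = qmul (qmul (a i) (b j)) (c k))"

definition qtensor_rank :: "nat \<Rightarrow> nat \<Rightarrow> nat \<Rightarrow> qtensor \<Rightarrow> nat" where
  "qtensor_rank n1 n2 n3 T = (LEAST r. \<exists>Ts :: qtensor list. length Ts = r \<and>
      (\<forall>S\<in>set Ts. simple_qtensor n1 n2 n3 S) \<and>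
      qtensor_eq n1 n2 n3 T (foldr qtensor_add Ts qtensor_zero))"

end

theory Submission
  imports Defs
begin

instantiation quat :: "{zero,one,plus,minus,uminus,times,inverse}"
begin
definition "0 = qzero"
definition "1 = Quat 1 0 0 0"
definition "p + q = qadd p q"
definition "p - q = Quat (Re_q p - Re_q q) (Im1 p - Im1 q) (Im2 p - Im2 q) (Im3 p - Im3 q)"
definition "- q = Quat (- Re_q q) (- Im1 q) (- Im2 q) (- Im3 q)"
definition "p * q = qmul p q"
definition "inverse q = (let n = (Re_q q)^2 + (Im1 q)^2 + (Im2 q)^2 + (Im3 q)^2 in
   Quat (Re_q q / n) (- Im1 q / n) (- Im2 q / n) (- Im3 q / n))"
definition "divide p q = p * inverse (q::quat)"
instance ..
end

lemma quat_eqI: "Re_q p = Re_q q \<Longrightarrow> Im1 p = Im1 q \<Longrightarrow> Im2 p = Im2 q \<Longrightarrow> Im3 p = Im3 q \<Longrightarrow> p = q"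
  by (cases p; cases q) auto

lemma quat_simps [simp]:
  "Re_q 0 = 0" "Im1 0 = 0" "Im2 0 = 0" "Im3 0 = 0"
  "Re_q 1 = 1" "Im1 1 = 0" "Im2 1 = 0" "Im3 1 = 0"
  "Re_q (p + q) = Re_q p + Re_q q" "Im1 (p + q) = Im1 p + Im1 q"
  "Im2 (p + q) = Im2 p + Im2 q" "Im3 (p + q) = Im3 p + Im3 q"
  "Re_q (p - q) = Re_q p - Re_q q" "Im1 (p - q) = Im1 p - Im1 q"
  "Im2 (p - q) = Im2 p - Im2 q" "Im3 (p - q) = Im3 p - Im3 q"
  "Re_q (- q) = - Re_q q" "Im1 (- q) = - Im1 q"
  "Im2 (- q) = - Im2 q" "Im3 (- q) = - Im3 q"
  "Re_q (p * q) = Re_q p * Re_q q - Im1 p * Im1 q - Im2 p * Im2 q - Im3 p * Im3 q"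
  "Im1 (p * q) = Re_q p * Im1 q + Im1 p * Re_q q + Im2 p * Im3 q - Im3 p * Im2 q"
  "Im2 (p * q) = Re_q p * Im2 q - Im1 p * Im3 q + Im2 p * Re_q q + Im3 p * Im1 q"
  "Im3 (p * q) = Re_q p * Im3 q + Im1 p * Im2 q - Im2 p * Im1 q + Im3 p * Re_q q"
  by (simp_all add: zero_quat_def one_quat_def plus_quat_def minus_quat_def uminus_quat_def
      times_quat_def qzero_def qadd_def qmul_def)

lemma norm_nz: "(q::quat) \<noteq> 0 \<Longrightarrow> (Re_q q)^2 + (Im1 q)^2 + (Im2 q)^2 + (Im3 q)^2 \<noteq> 0"
proof
  assume "q \<noteq> 0" and h: "(Re_q q)^2 + (Im1 q)^2 + (Im2 q)^2 + (Im3 q)^2 = 0"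
  hence "Re_q q = 0" "Im1 q = 0" "Im2 q = 0" "Im3 q = 0"
    by (smt (verit) power2_less_eq_zero_iff zero_le_power2)+
  hence "q = 0" by (intro quat_eqI) auto
  with \<open>q \<noteq> 0\<close> show False by simp
qed

instance quat :: division_ring
proof
  fix a b c :: quat
  show "a * b * c = a * (b * c)" by (rule quat_eqI) (simp_all add: algebra_simps)
  show "1 * a = a" by (rule quat_eqI) simp_all
  show "a * 1 = a" by (rule quat_eqI) simp_all
  show "(a + b) * c = a * c + b * c" by (rule quat_eqI) (simp_all add: algebra_simps)
  show "a * (b + c) = a * b + a * c" by (rule quat_eqI) (simp_all add: algebra_simps)
  show "a + b + c = a + (b + c)" by (rule quat_eqI) simp_all
  show "a + b = b + a" by (rule quat_eqI) simp_all
  show "0 + a = a" by (rule quat_eqI) simp_all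
  show "- a + a = 0" by (rule quat_eqI) simp_all
  show "a - b = a + - b" by (rule quat_eqI) simp_all
  show "(0::quat) \<noteq> 1" by (metis quat_simps(1,5) zero_neq_one)
  show "a / b = a * inverse b" by (simp add: divide_quat_def)
  show "inverse (0::quat) = 0" by (rule quat_eqI) (simp_all add: inverse_quat_def Let_def)
next
  fix a :: quat assume a: "a \<noteq> 0"
  have n: "(Re_q a)^2 + (Im1 a)^2 + (Im2 a)^2 + (Im3 a)^2 \<noteq> 0" using norm_nz[OF a] .
  define n where "n = (Re_q a)^2 + (Im1 a)^2 + (Im2 a)^2 + (Im3 a)^2"
  have n': "n \<noteq> 0" using n n_def by simp
  have inv: "inverse a = Quat (Re_q a / n) (- Im1 a / n) (- Im2 a / n) (- Im3 a / n)"
    by (simp add: inverse_quat_def n_def Let_def)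
  have ni: "n * inverse n = 1" using n' by simp
  have re: "Re_q a * Re_q a * inverse n + Im1 a * Im1 a * inverse n + Im2 a * Im2 a * inverse n
     + Im3 a * Im3 a * inverse n = 1"
    using ni unfolding n_def power2_eq_square by (simp add: algebra_simps)
  show "inverse a * a = 1"
    apply (intro quat_eqI)
    using re by (simp_all add: inv divide_inverse algebra_simps)
  show "a * inverse a = 1"
    apply (intro quat_eqI)
    using re by (simp_all add: inv divide_inverse algebra_simps)
qed

lemma inv_cancel1 [simp]: "(a::quat) \<noteq> 0 \<Longrightarrow> inverse a * (a * b) = b"
  by (simp flip: mult.assoc)
lemma inv_cancel2 [simp]: "(a::quat) \<noteq> 0 \<Longrightarrow> a * (inverse a * b) = b"
  by (simp flip: mult.assoc)

lemma qadd_plus: "qadd p q = p + q" by (simp add: plus_quat_def)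
lemma qmul_times: "qmul p q = p * q" by (simp add: times_quat_def)

lemma foldr_eval: "foldr qtensor_add (Ts::qtensor list) qtensor_zero i j k = (\<Sum>S\<leftarrow>Ts. S i j k)"
  by (induction Ts) (simp_all add: qtensor_add_def qtensor_zero_def qadd_plus zero_quat_def)

lemma rank_le:
  assumes prod: "\<forall>S\<in>set Ts. \<exists>a b c. \<forall>i j k. S i j k = a i * b j * c k"
    and eq: "\<forall>i<n1. \<forall>j<n2. \<forall>k<n3. T i j k = (\<Sum>S\<leftarrow>Ts. S i j k)"
  shows "qtensor_rank n1 n2 n3 T \<le> length Ts"
proof -
  define Us where "Us = filter (\<lambda>S. \<not> qtensor_eq n1 n2 n3 S qtensor_zero) Ts"
  have simp: "\<forall>S\<in>set Us. simple_qtensor n1 n2 n3 S"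
    using prod unfolding Us_def simple_qtensor_def qmul_times by fastforce
  have sums: "(\<Sum>S\<leftarrow>Us. S i j k) = (\<Sum>S\<leftarrow>Ts. S i j k)" if "i<n1" "j<n2" "k<n3" for i j k
    unfolding Us_def using that
    by (induction Ts) (auto simp: qtensor_eq_def qtensor_zero_def zero_quat_def)
  have "qtensor_eq n1 n2 n3 T (foldr qtensor_add Us qtensor_zero)"
    using eq sums by (simp add: qtensor_eq_def foldr_eval)
  hence "qtensor_rank n1 n2 n3 T \<le> length Us"
    unfolding qtensor_rank_def using simp by (intro Least_le) blast
  also have "\<dots> \<le> length Ts" unfolding Us_def by simp
  finally show ?thesis .
qed

definition vec :: "quat \<Rightarrow> quat \<Rightarrow> nat \<Rightarrow> quat" where
  "vec x y = (\<lambda>i. if i = 0 then x else y)"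

definition P :: "(nat \<Rightarrow> quat) \<Rightarrow> (nat \<Rightarrow> quat) \<Rightarrow> (nat \<Rightarrow> quat) \<Rightarrow> qtensor" where
  "P a b c = (\<lambda>i j k. a i * b j * c k)"

lemma all2: "(\<forall>i<(2::nat). Q i) = (Q 0 \<and> Q 1)"
  by (auto simp: less_Suc_eq numeral_2_eq_2)

lemma rank3:
  assumes "\<forall>i<2. \<forall>j<2. \<forall>k<2. T i j k = P aX bX cX i j k + (P aY bY cY i j k + (P aZ bZ cZ i j k + 0))"
  shows "qtensor_rank 2 2 2 T \<le> 3"
proof -
  have "qtensor_rank 2 2 2 T \<le> length [P aX bX cX, P aY bY cY, P aZ bZ cZ]"
    by (rule rank_le) (use assms in \<open>auto simp: P_def\<close>)
  thus ?thesis by simp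
qed

theorem mainTheorem5:
  fixes T :: qtensor
  shows "qtensor_rank 2 2 2 T \<le> 3"
proof -
  define x00 where "x00 = T 0 0 0"
  define x01 where "x01 = T 0 0 1"
  define x10 where "x10 = T 0 1 0"
  define x11 where "x11 = T 0 1 1"
  define y00 where "y00 = T 1 0 0"
  define y01 where "y01 = T 1 0 1"
  define y10 where "y10 = T 1 1 0"
  define y11 where "y11 = T 1 1 1"
  note defs = x00_def x01_def x10_def x11_def y00_def y01_def y10_def y11_def
  show ?thesis
  proof (cases "x00 = 0")
    case x: False
    show ?thesis
    proof (cases "y00 = 0")
      case y: False
      define l where "l = y00 * inverse x00"
      define m where "m = x00 * inverse y00 * y10 * inverse x00"
      define s where "s = y01 - l * x01"
      define t where "t = y11 - y10 * inverse x00 * x01"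
      show ?thesis
        apply (rule rank3[where aX="vec 1 0" and bX="vec 0 1" and cX="vec (x10 - m * x00) (x11 - m * x01)"
              and aY="vec 0 1" and bY="vec s t" and cY="vec 0 1"
              and aZ="vec 1 l" and bZ="vec 1 m" and cZ="vec x00 x01"])
        unfolding all2 using x y
        by (simp_all add: P_def vec_def defs l_def m_def s_def t_def algebra_simps)
    next
      case y: True
      define mm where "mm = (x10 - y10) * inverse x00"
      define r where "r = x11 - mm * x01"
      show ?thesis
        apply (rule rank3[where aX="vec 1 0" and bX="vec 1 mm" and cX="vec x00 x01"
              and aY="vec 0 1" and bY="vec y01 (y11 - r)" and cY="vec 0 1"
              and aZ="vec 1 1" and bZ="vec 0 1" and cZ="vec y10 r"])
        unfolding all2 using x y
        by (simp_all add: P_def vec_def defs mm_def r_def algebra_simps)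
    qed
  next
    case x: True
    show ?thesis
    proof (cases "y00 = 0")
      case y: False
      define mm where "mm = (y10 - x10) * inverse y00"
      define r where "r = y11 - mm * y01"
      show ?thesis
        apply (rule rank3[where aX="vec 0 1" and bX="vec 1 mm" and cX="vec y00 y01"
              and aY="vec 1 0" and bY="vec x01 (x11 - r)" and cY="vec 0 1"
              and aZ="vec 1 1" and bZ="vec 0 1" and cZ="vec x10 r"])
        unfolding all2 using x y
        by (simp_all add: P_def vec_def defs mm_def r_def algebra_simps)
    next
      case y: True
      show ?thesis
        apply (rule rank3[where aX="vec x01 y01" and bX="vec 1 0" and cX="vec 0 1"
              and aY="vec 1 0" and bY="vec 0 1" and cY="vec x10 x11"
              and aZ="vec 0 1" and bZ="vec 0 1" and cZ="vec y10 y11"])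
        unfolding all2 using x y
        by (simp_all add: P_def vec_def defs)
    qed
  qed
qed

end
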